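(* In the setting described in the context (with any one of the three learning-rate setups (a), (b), (c)), there exist a deterministic constant $C$ and an integer $m_0$ such that for all $m\ge m_0$, $$\|z_{1,m}\|_m\le T_m^2\,C\,\big(\|w_{t_m}-w_*\|_m+1\big).$$
   Context: Setting. $\{Y_t\}_{t\ge0}$ is a Markov chain on a measurable space $\mathcal{Y}$ with transition kernel $P$ and unique stationary distribution $d_{\mathcal{Y}}$, with $\int|P^n(y,y')-d_{\mathcal{Y}}(y')|\,\mathrm{d}y'\le C_A\varrho^n$ for all $y,n$, some $\varrho\in[0,1)$. $H:\mathbb{R}^d\times\mathcal{Y}\to\mathbb{R}^d$, $h(w)=\mathbb{E}_{y\sim d_{\mathcal{Y}}}[H(w,y)]$; for some norm $\|\cdot\|$ and $\kappa\in[0,1)$, $\|h(w)-h(w')\|\le\kappa\|w-w'\|$, with fixed point $w_*$; $\|H(w,y)-H(w',y)\|\le L_h\|w-w'\|$ for all $w,w',y$ and $\sup_y\|H(0,y)\|<\infty$. Iterates: $w_0\in\mathbb{R}^d$, $w_{t+1}=w_t+\alpha_t(H(w_t,Y_{t+1})-w_t)$. Put $G(w,y)=H(w,y)-w$, $g(w)=h(w)-w$. Learning-rate setups with $C_\alpha>0$: (a) $\alpha_t=\frac{C_\alpha}{t+3}$, $T_m=\frac{C_\alpha\ln^{\nu_1}(m+3)}{m+3}$, $\nu_1\in(0,1)$; (b) $\alpha_t=\frac{C_\alpha}{(t+3)^\nu}$, $\nu\in(\frac23,1)$, $T_m=\frac{C_\alpha}{(m+3)^{\nu_2}}$, $\frac12<\nu_2<\frac\nu{2-\nu}$;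 (c) $\alpha_t=\frac{C_\alpha}{(t+3)\ln^\nu(t+3)}$, $\nu\in(0,1)$, $T_m=\frac{C_\alpha}{m+3}$. Anchors: $t_0=0$, $t_{m+1}=\min\{k:\sum_{t=t_m}^{k-1}\alpha_t\ge T_m\}$. Define $z_{1,m}=\sum_{t=t_m}^{t_{m+1}-1}\alpha_t\big(G(w_t,Y_{t+1})-G(w_{t_m},Y_{t+1})\big)$. The norm $\|\cdot\|_m$: fix a norm $\|\cdot\|_s$ such that $\frac12\|\cdot\|_s^2$ is smooth w.r.t. $\|\cdot\|_s$ and $\xi>0$; $\|\cdot\|_m$ is the norm with $\frac12\|w\|_m^2=\inf_u\{\frac12\|u\|^2+\frac1{2\xi}\|w-u\|_s^2\}$. *)

theory Defs
  imports "HOL-Probability.Probability"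
begin

definition is_norm :: "('a::real_vector \<Rightarrow> real) \<Rightarrow> bool" where
  "is_norm N \<longleftrightarrow> (\<forall>x. N x = 0 \<longleftrightarrow> x = 0) \<and> (\<forall>x y. N (x + y) \<le> N x + N y)
     \<and> (\<forall>c x. N (c *\<^sub>R x) = \<bar>c\<bar> * N x)"

text \<open>1/2 N(.)^2 is smooth w.r.t. N: differentiable with N-Lipschitz gradient
  (gradient difference measured in the dual norm).\<close>
definition half_sq_smooth :: "('a::real_normed_vector \<Rightarrow> real) \<Rightarrow> bool" where
  "half_sq_smooth N \<longleftrightarrow> (\<exists>L Df. (\<forall>x. ((\<lambda>u. (N u)\<^sup>2 / 2) has_derivative Df x) (at x))
       \<and> (\<forall>x y v. \<bar>Df x v - Df y v\<bar> \<le> L * N (x - y) * N v))"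

definition Mnorm :: "('a::real_vector \<Rightarrow> real) \<Rightarrow> ('a \<Rightarrow> real) \<Rightarrow> real \<Rightarrow> 'a \<Rightarrow> real" where
  "Mnorm N Ns \<xi> w = sqrt (2 * (INF u. (N u)\<^sup>2 / 2 + (Ns (w - u))\<^sup>2 / (2 * \<xi>)))"

fun kernel_pow :: "'y measure \<Rightarrow> ('y \<Rightarrow> 'y measure) \<Rightarrow> nat \<Rightarrow> 'y \<Rightarrow> 'y measure" where
  "kernel_pow M P 0 y = return M y"
| "kernel_pow M P (Suc n) y = bind (kernel_pow M P n y) P"

definition setup_a :: "real \<Rightarrow> (nat \<Rightarrow> real) \<Rightarrow> (nat \<Rightarrow> real) \<Rightarrow> bool" where
  "setup_a C\<alpha> \<alpha> T \<longleftrightarrow> (\<exists>\<nu>1. 0 < \<nu>1 \<and> \<nu>1 < 1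
     \<and> \<alpha> = (\<lambda>t. C\<alpha> / (real t + 3))
     \<and> T = (\<lambda>m. C\<alpha> * (ln (real m + 3)) powr \<nu>1 / (real m + 3)))"

definition setup_b :: "real \<Rightarrow> (nat \<Rightarrow> real) \<Rightarrow> (nat \<Rightarrow> real) \<Rightarrow> bool" where
  "setup_b C\<alpha> \<alpha> T \<longleftrightarrow> (\<exists>\<nu> \<nu>2. 2/3 < \<nu> \<and> \<nu> < 1 \<and> 1/2 < \<nu>2 \<and> \<nu>2 < \<nu> / (2 - \<nu>)
     \<and> \<alpha> = (\<lambda>t. C\<alpha> / (real t + 3) powr \<nu>)
     \<and> T = (\<lambda>m. C\<alpha> / (real m + 3) powr \<nu>2))"

definition setup_c :: "real \<Rightarrow> (nat \<Rightarrow> real) \<Rightarrow> (nat \<Rightarrow> real) \<Rightarrow> bool" where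
  "setup_c C\<alpha> \<alpha> T \<longleftrightarrow> (\<exists>\<nu>. 0 < \<nu> \<and> \<nu> < 1
     \<and> \<alpha> = (\<lambda>t. C\<alpha> / ((real t + 3) * (ln (real t + 3)) powr \<nu>))
     \<and> T = (\<lambda>m. C\<alpha> / (real m + 3)))"

fun anchor :: "(nat \<Rightarrow> real) \<Rightarrow> (nat \<Rightarrow> real) \<Rightarrow> nat \<Rightarrow> nat" where
  "anchor \<alpha> T 0 = 0"
| "anchor \<alpha> T (Suc m) = (LEAST k. (\<Sum>t\<in>{anchor \<alpha> T m..<k}. \<alpha> t) \<ge> T m)"

fun iter :: "('v::real_vector \<Rightarrow> 'y \<Rightarrow> 'v) \<Rightarrow> (nat \<Rightarrow> real) \<Rightarrow> 'v \<Rightarrow> (nat \<Rightarrow> 'y) \<Rightarrow> nat \<Rightarrow> 'v" where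
  "iter H \<alpha> w0 Y 0 = w0"
| "iter H \<alpha> w0 Y (Suc t) = iter H \<alpha> w0 Y t
     + \<alpha> t *\<^sub>R (H (iter H \<alpha> w0 Y t) (Y (Suc t)) - iter H \<alpha> w0 Y t)"

definition z1 :: "('v::real_vector \<Rightarrow> 'y \<Rightarrow> 'v) \<Rightarrow> (nat \<Rightarrow> real) \<Rightarrow> (nat \<Rightarrow> real) \<Rightarrow> 'v
     \<Rightarrow> (nat \<Rightarrow> 'y) \<Rightarrow> nat \<Rightarrow> 'v" where
  "z1 H \<alpha> T w0 Y m =
     (let G = (\<lambda>w y. H w y - w); w = iter H \<alpha> w0 Y; tm = anchor \<alpha> T m in
      \<Sum>t\<in>{tm..<anchor \<alpha> T (Suc m)}. \<alpha> t *\<^sub>R (G (w t) (Y (Suc t)) - G (w tm) (Y (Suc t))))"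

end

theory Submission
  imports Defs
begin

lemma isn_0: "is_norm N \<Longrightarrow> N 0 = 0" by (simp add: is_norm_def)
lemma isn_tri: "is_norm N \<Longrightarrow> N (x + y) \<le> N x + N y" by (simp add: is_norm_def)
lemma isn_scale: "is_norm N \<Longrightarrow> N (c *\<^sub>R x) = \<bar>c\<bar> * N x" by (simp add: is_norm_def)
lemma isn_zero_iff: "is_norm N \<Longrightarrow> N x = 0 \<longleftrightarrow> x = 0" by (simp add: is_norm_def)
lemma isn_minus: "is_norm N \<Longrightarrow> N (- x) = N x"
  using isn_scale[of N "-1" x] by simp
lemma isn_nonneg: "is_norm N \<Longrightarrow> N x \<ge> 0"
proof -
  assume n: "is_norm N"
  have "0 = N (x + - x)" using isn_0[OF n] by simp
  also have "\<dots> \<le> N x + N (- x)" by (rule isn_tri[OF n])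
  finally show ?thesis using isn_minus[OF n] by simp
qed
lemma isn_diff: "is_norm N \<Longrightarrow> N (x - y) \<le> N x + N y"
  using isn_tri[of N x "- y"] isn_minus[of N y] by simp
lemma isn_sum: "is_norm N \<Longrightarrow> N (sum f A) \<le> (\<Sum>a\<in>A. N (f a))"
proof (induction A rule: infinite_finite_induct)
  case (infinite A) then show ?case by (simp add: isn_0)
next
  case empty then show ?case by (simp add: isn_0)
next
  case (insert x F)
  then show ?case using isn_tri[OF insert.prems, of "f x" "sum f F"] by simp
qed
lemma isn_rev: "is_norm N \<Longrightarrow> N x - N y \<le> N (x - y)"
  using isn_tri[of N "x - y" y] by simp

lemma isn_upper:
  fixes N :: "'a::euclidean_space \<Rightarrow> real"
  assumes n: "is_norm N" shows "\<exists>K>0. \<forall>x. N x \<le> K * norm x"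
proof -
  define K where "K = (\<Sum>b\<in>Basis. N b) + 1"
  have K0: "K > 0" proof -
    have "sum N Basis \<ge> 0" by (rule sum_nonneg) (rule isn_nonneg[OF n])
    then show ?thesis unfolding K_def by simp
  qed
  have "N x \<le> K * norm x" for x
  proof -
    have "N x = N (\<Sum>b\<in>Basis. inner x b *\<^sub>R b)" by (simp add: euclidean_representation)
    also have "\<dots> \<le> (\<Sum>b\<in>Basis. N (inner x b *\<^sub>R b))" by (rule isn_sum[OF n])
    also have "\<dots> = (\<Sum>b\<in>Basis. \<bar>inner x b\<bar> * N b)" by (simp add: isn_scale[OF n])
    also have "\<dots> \<le> (\<Sum>b\<in>Basis. norm x * N b)"
      by (intro sum_mono mult_right_mono Basis_le_norm isn_nonneg[OF n])
    also have "\<dots> \<le> K * norm x" unfolding K_def by (simp add: sum_distrib_left algebra_simps)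
    finally show ?thesis .
  qed
  with K0 show ?thesis by blast
qed

lemma isn_lower:
  fixes N :: "'a::euclidean_space \<Rightarrow> real"
  assumes n: "is_norm N" shows "\<exists>c>0. \<forall>x. c * norm x \<le> N x"
proof -
  obtain K where K: "K > 0" "\<And>x. N x \<le> K * norm x" using isn_upper[OF n] by blast
  have cont: "continuous_on (sphere 0 1) N"
    unfolding continuous_on_iff
  proof (intro ballI allI impI)
    fix x e assume "x \<in> sphere (0::'a) 1" "(e::real) > 0"
    show "\<exists>d>0. \<forall>x'\<in>sphere 0 1. dist x' x < d \<longrightarrow> dist (N x') (N x) < e"
    proof (intro exI[of _ "e / K"] conjI ballI impI)
      show "e / K > 0" using K \<open>e>0\<close> by simp
      fix x' assume "dist x' x < e / K"
      have "\<bar>N x' - N x\<bar> \<le> K * norm (x' - x)"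
        using isn_rev[OF n, of x' x] isn_rev[OF n, of x x'] K(2)[of "x' - x"] K(2)[of "x - x'"]
        by (simp add: norm_minus_commute)
      also have "\<dots> < e" using \<open>dist x' x < e / K\<close> K by (simp add: dist_norm field_simps)
      finally show "dist (N x') (N x) < e" by (simp add: dist_real_def)
    qed
  qed
  obtain b :: 'a where b: "b \<in> Basis" using nonempty_Basis by blast
  have ne: "sphere (0::'a) 1 \<noteq> {}" using b by (auto intro!: exI[of _ b])
  obtain x0 where x0: "x0 \<in> sphere 0 1" "\<And>y. y \<in> sphere 0 1 \<Longrightarrow> N x0 \<le> N y"
    using continuous_attains_inf[OF compact_sphere ne cont] by blast
  have c0: "N x0 > 0" using x0(1) isn_zero_iff[OF n, of x0] isn_nonneg[OF n, of x0] by auto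
  have "N x0 * norm x \<le> N x" for x
  proof (cases "x = 0")
    case True then show ?thesis by (simp add: isn_0[OF n])
  next
    case False
    have "N x0 \<le> N (inverse (norm x) *\<^sub>R x)" using x0(2) False by simp
    also have "\<dots> = N x / norm x" using isn_scale[OF n] by (simp add: divide_inverse_commute)
    finally show ?thesis using False by (simp add: field_simps)
  qed
  with c0 show ?thesis by blast
qed


lemma Mnorm_bdd:
  assumes n: "is_norm N" "is_norm Ns" and xi: "\<xi> > 0"
  shows "bdd_below (range (\<lambda>u. (N u)\<^sup>2 / 2 + (Ns (w - u))\<^sup>2 / (2 * \<xi>)))"
  by (rule bdd_belowI[of _ 0]) (use xi in auto)

lemma Mnorm_INF_nonneg:
  assumes xi: "\<xi> > 0"
  shows "(INF u. (N u)\<^sup>2 / 2 + (Ns (w - u))\<^sup>2 / (2 * \<xi>)) \<ge> (0::real)"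
  by (rule cINF_greatest) (use xi in auto)

lemma Mnorm_nonneg: "\<xi> > 0 \<Longrightarrow> Mnorm N Ns \<xi> w \<ge> 0"
  unfolding Mnorm_def using Mnorm_INF_nonneg[of \<xi> N Ns w] by simp

lemma Mnorm_le:
  assumes n: "is_norm N" "is_norm Ns" and xi: "\<xi> > 0"
  shows "Mnorm N Ns \<xi> w \<le> N w"
proof -
  have "(INF u. (N u)\<^sup>2 / 2 + (Ns (w - u))\<^sup>2 / (2 * \<xi>)) \<le> (N w)\<^sup>2 / 2 + (Ns (w - w))\<^sup>2 / (2 * \<xi>)"
    by (rule cINF_lower[OF Mnorm_bdd[OF n xi]]) simp
  also have "\<dots> = (N w)\<^sup>2 / 2" using isn_0[OF n(2)] by simp
  finally have "Mnorm N Ns \<xi> w \<le> sqrt ((N w)\<^sup>2)" unfolding Mnorm_def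
    by (intro real_sqrt_le_mono) simp
  then show ?thesis using isn_nonneg[OF n(1)] by simp
qed

lemma Mnorm_ge:
  fixes N Ns :: "'a::euclidean_space \<Rightarrow> real"
  assumes n: "is_norm N" "is_norm Ns" and xi: "\<xi> > 0"
  shows "\<exists>c>0. \<forall>w. c * N w \<le> Mnorm N Ns \<xi> w"
proof -
  obtain K where K: "K > 0" "\<And>x. N x \<le> K * norm x" using isn_upper[OF n(1)] by blast
  obtain c1 where c1: "c1 > 0" "\<And>x. c1 * norm x \<le> Ns x" using isn_lower[OF n(2)] by blast
  define cs where "cs = c1 / K"
  have cs0: "cs > 0" using K c1 by (simp add: cs_def)
  have cs: "cs * N x \<le> Ns x" for x
  proof -
    have "cs * N x \<le> cs * (K * norm x)" using K(2) cs0 by (simp add: mult_left_mono)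
    also have "\<dots> = c1 * norm x" using K by (simp add: cs_def)
    finally show ?thesis using c1(2)[of x] by simp
  qed
  define \<mu> where "\<mu> = min 1 (cs\<^sup>2 / \<xi>)"
  have mu0: "\<mu> > 0" using cs0 xi by (simp add: \<mu>_def)
  have "\<mu> * (N w)\<^sup>2 / 4 \<le> Mnorm N Ns \<xi> w ^ 2 / 2" for w
  proof -
    have "\<mu> * (N w)\<^sup>2 / 4 \<le> (INF u. (N u)\<^sup>2 / 2 + (Ns (w - u))\<^sup>2 / (2 * \<xi>))"
    proof (rule cINF_greatest)
      fix u
      have a: "N u \<ge> 0" "N (w - u) \<ge> 0" "N w \<ge> 0" using isn_nonneg[OF n(1)] by auto
      have tri: "N w \<le> N u + N (w - u)" using isn_tri[OF n(1), of u "w - u"] by simp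
      have "(N w)\<^sup>2 \<le> (N u + N (w - u))\<^sup>2" using tri a by (simp add: power_mono)
      also have "\<dots> \<le> 2 * ((N u)\<^sup>2 + (N (w - u))\<^sup>2)"
        using zero_le_power2[of "N u - N (w - u)"] by (simp add: power2_eq_square algebra_simps)
      finally have s1: "\<mu> * (N w)\<^sup>2 / 4 \<le> \<mu> * ((N u)\<^sup>2 + (N (w - u))\<^sup>2) / 2"
        using mu0 by (simp add: mult_left_mono)
      have m1: "\<mu> \<le> 1" and m2: "\<mu> \<le> cs\<^sup>2 / \<xi>" by (auto simp: \<mu>_def)
      have "\<mu> * (N u)\<^sup>2 \<le> (N u)\<^sup>2" using m1 mult_right_mono[OF m1 zero_le_power2[of "N u"]] by simp
      moreover have "\<mu> * (N (w - u))\<^sup>2 \<le> (Ns (w - u))\<^sup>2 / \<xi>"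
      proof -
        have "\<mu> * (N (w - u))\<^sup>2 \<le> cs\<^sup>2 / \<xi> * (N (w - u))\<^sup>2" by (rule mult_right_mono[OF m2 zero_le_power2])
        also have "\<dots> = (cs * N (w - u))\<^sup>2 / \<xi>" by (simp add: power_mult_distrib)
        also have "\<dots> \<le> (Ns (w - u))\<^sup>2 / \<xi>"
          using cs[of "w - u"] cs0 a xi by (intro divide_right_mono power_mono) auto
        finally show ?thesis .
      qed
      ultimately show "\<mu> * (N w)\<^sup>2 / 4 \<le> (N u)\<^sup>2 / 2 + (Ns (w - u))\<^sup>2 / (2 * \<xi>)"
        using s1 by (simp add: field_simps)
    qed simp
    also have "\<dots> = Mnorm N Ns \<xi> w ^ 2 / 2"
    proof -
      note Mnorm_INF_nonneg[OF xi, of N Ns w]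
      then have "0 \<le> 2 * (INF u. (N u)\<^sup>2 / 2 + (Ns (w - u))\<^sup>2 / (2 * \<xi>))" by simp
      from real_sqrt_pow2[OF this] show ?thesis unfolding Mnorm_def by simp
    qed
    finally show ?thesis .
  qed
  then have "sqrt (\<mu> / 2) * N w \<le> Mnorm N Ns \<xi> w" for w
  proof -
    have "(sqrt (\<mu> / 2) * N w)\<^sup>2 \<le> (Mnorm N Ns \<xi> w)\<^sup>2"
      using \<open>\<mu> * (N w)\<^sup>2 / 4 \<le> Mnorm N Ns \<xi> w ^ 2 / 2\<close> mu0 by (simp add: power_mult_distrib)
    moreover have "Mnorm N Ns \<xi> w \<ge> 0" by (rule Mnorm_nonneg[OF xi])
    ultimately show ?thesis using power2_le_imp_le by blast
  qed
  moreover have "sqrt (\<mu> / 2) > 0" using mu0 by simp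
  ultimately show ?thesis by blast
qed


lemma anchor_props:
  fixes \<alpha> T :: "nat \<Rightarrow> real"
  assumes apos: "\<forall>t. 0 \<le> \<alpha> t" and anti: "\<forall>s t. s \<le> t \<longrightarrow> \<alpha> t \<le> \<alpha> s"
    and aT: "\<forall>m. \<alpha> m \<le> T m" and Tpos: "\<forall>m. 0 < T m"
    and dv: "\<forall>a x. \<exists>k. x \<le> (\<Sum>t\<in>{a..<k}. \<alpha> t)"
  shows "anchor \<alpha> T m < anchor \<alpha> T (Suc m)"
    and "m \<le> anchor \<alpha> T m"
    and "(\<Sum>t\<in>{anchor \<alpha> T m..<anchor \<alpha> T (Suc m)}. \<alpha> t) \<le> 2 * T m"
proof -
  have lt: "anchor \<alpha> T m < anchor \<alpha> T (Suc m)" for m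
  proof -
    let ?P = "\<lambda>k. (\<Sum>t\<in>{anchor \<alpha> T m..<k}. \<alpha> t) \<ge> T m"
    have ex: "\<exists>k. ?P k" using dv by blast
    have "?P (anchor \<alpha> T (Suc m))" using LeastI_ex[OF ex] by simp
    moreover have "\<not> ?P k" if "k \<le> anchor \<alpha> T m" for k using that Tpos by (simp add: not_le)
    ultimately show ?thesis by (meson not_le)
  qed
  show "anchor \<alpha> T m < anchor \<alpha> T (Suc m)" by (rule lt)
  have ge: "m \<le> anchor \<alpha> T m" for m
  proof (induction m)
    case 0 then show ?case by simp
  next
    case (Suc m) then show ?case using lt[of m] by simp
  qed
  show "m \<le> anchor \<alpha> T m" by (rule ge)
  define a where "a = anchor \<alpha> T m"
  define b where "b = anchor \<alpha> T (Suc m)"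
  have ab: "a < b" using lt[of m] by (simp add: a_def b_def)
  then obtain k where k: "b = Suc k" "a \<le> k" using ab by (intro that[of "b - 1"]) auto
  have "\<not> (\<Sum>t\<in>{a..<k}. \<alpha> t) \<ge> T m"
  proof -
    have "k < (LEAST k. (\<Sum>t\<in>{anchor \<alpha> T m..<k}. \<alpha> t) \<ge> T m)" using k b_def by simp
    from not_less_Least[OF this] show ?thesis by (simp add: a_def)
  qed
  moreover have "\<alpha> k \<le> T m"
  proof -
    have "m \<le> k" using ge[of m] k(2) unfolding a_def by linarith
    then have "\<alpha> k \<le> \<alpha> m" using anti by blast
    then show ?thesis using aT by (meson order.trans)
  qed
  moreover have "(\<Sum>t\<in>{a..<b}. \<alpha> t) = (\<Sum>t\<in>{a..<k}. \<alpha> t) + \<alpha> k" using k by simp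
  ultimately show "(\<Sum>t\<in>{anchor \<alpha> T m..<anchor \<alpha> T (Suc m)}. \<alpha> t) \<le> 2 * T m"
    by (simp add: a_def b_def)
qed

lemma exp_step:
  fixes e S s Lp AR :: real
  assumes "0 \<le> S" "0 \<le> s" "0 \<le> Lp" "0 \<le> AR" "0 \<le> e"
    and ih: "e \<le> AR * S * exp (Lp * S)"
  shows "e + s * (Lp * e + AR) \<le> AR * (S + s) * exp (Lp * (S + s))"
proof -
  define E where "E = exp (Lp * S)"
  have E1: "E \<ge> 1" unfolding E_def using assms by simp
  have F: "exp (Lp * s) \<ge> 1 + Lp * s" by (rule exp_ge_add_one_self)
  have "e + s * (Lp * e + AR) = (1 + s * Lp) * e + s * AR" by (simp add: algebra_simps)
  also have "\<dots> \<le> (1 + s * Lp) * (AR * S * E) + s * AR"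
  proof -
    have "0 \<le> 1 + s * Lp" using assms by simp
    from mult_left_mono[OF ih[folded E_def] this] show ?thesis by simp
  qed
  also have "\<dots> \<le> (1 + s * Lp) * (AR * S * E) + s * AR * E * (1 + Lp * s)"
  proof -
    have "1 \<le> E * (1 + Lp * s)" using mult_mono[OF E1, of 1 "1 + Lp * s"] assms E1 by simp
    then have "s * AR * 1 \<le> s * AR * (E * (1 + Lp * s))" using assms by (intro mult_left_mono) auto
    then show ?thesis by (simp add: mult.assoc)
  qed
  also have "\<dots> = AR * (S + s) * E * (1 + Lp * s)" by (simp add: algebra_simps)
  also have "\<dots> \<le> AR * (S + s) * E * exp (Lp * s)"
  proof -
    have "0 \<le> AR * (S + s) * E" using assms E1 by simp
    from mult_left_mono[OF F this] show ?thesis .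
  qed
  also have "\<dots> = AR * (S + s) * exp (Lp * (S + s))" by (simp add: E_def distrib_left exp_add)
  finally show ?thesis .
qed


lemma main_generic:
  fixes H :: "'a::euclidean_space \<Rightarrow> 'y \<Rightarrow> 'a" and N :: "'a \<Rightarrow> real"
    and \<alpha> T :: "nat \<Rightarrow> real" and S :: "'y set"
  assumes n: "is_norm N"
    and lip: "\<forall>w w'. \<forall>y\<in>S. N (H w y - H w' y) \<le> L * N (w - w')"
    and bdd: "\<forall>y\<in>S. N (H 0 y) \<le> B"
    and apos: "\<forall>t. 0 \<le> \<alpha> t" and anti: "\<forall>s t. s \<le> t \<longrightarrow> \<alpha> t \<le> \<alpha> s"
    and aT: "\<forall>m. \<alpha> m \<le> T m" and Tpos: "\<forall>m. 0 < T m" and Tbd: "\<forall>m. T m \<le> Tmax"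
    and dv: "\<forall>a x. \<exists>k. x \<le> (\<Sum>t\<in>{a..<k}. \<alpha> t)"
  shows "\<exists>K. \<forall>Y. (\<forall>t. Y t \<in> S) \<longrightarrow> (\<forall>m. N (z1 H \<alpha> T w0 Y m)
            \<le> (T m)\<^sup>2 * K * (N (iter H \<alpha> w0 Y (anchor \<alpha> T m) - wstar) + 1))"
proof -
  define Lp where "Lp = \<bar>L\<bar> + 1"
  define A where "A = Lp + Lp * N wstar + \<bar>B\<bar>"
  define K where "K = 4 * Lp * A * exp (2 * Lp * Tmax)"
  have Lp0: "Lp \<ge> 1" by (simp add: Lp_def)
  have Nn: "\<And>x. N x \<ge> 0" by (rule isn_nonneg[OF n])
  have A0: "A \<ge> 0" unfolding A_def using Lp0 Nn[of wstar] by simp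
  have Tmax0: "Tmax \<ge> 0" using Tpos Tbd by (meson less_le_trans less_imp_le)
  show ?thesis
  proof (intro exI[of _ K] allI impI)
    fix Y :: "nat \<Rightarrow> 'y" and m :: nat
    assume Y: "\<forall>t. Y t \<in> S"
    define w where "w = iter H \<alpha> w0 Y"
    define a where "a = anchor \<alpha> T m"
    define b where "b = anchor \<alpha> T (Suc m)"
    define R where "R = N (w a - wstar) + 1"
    define Sm where "Sm = (\<lambda>t. \<Sum>s\<in>{a..<t}. \<alpha> s)"
    have R1: "R \<ge> 1" using Nn by (simp add: R_def)
    have Glip: "N ((H u y - u) - (H v y - v)) \<le> Lp * N (u - v)" if "y \<in> S" for u v y
    proof -
      have "N ((H u y - u) - (H v y - v)) = N ((H u y - H v y) - (u - v))" by (simp add: algebra_simps)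
      also have "\<dots> \<le> N (H u y - H v y) + N (u - v)" by (rule isn_diff[OF n])
      also have "\<dots> \<le> L * N (u - v) + N (u - v)" using lip that by auto
      also have "\<dots> \<le> Lp * N (u - v)" using Nn[of "u - v"] unfolding Lp_def
        by (simp add: distrib_right mult_right_mono)
      finally show ?thesis .
    qed
    have Gbd: "N (H (w a) y - w a) \<le> A * R" if "y \<in> S" for y
    proof -
      have "N (H (w a) y - w a) \<le> N (H (w a) y) + N (w a)" by (rule isn_diff[OF n])
      also have "N (H (w a) y) \<le> N (H (w a) y - H 0 y) + N (H 0 y)"
        using isn_tri[OF n, of "H (w a) y - H 0 y" "H 0 y"] by simp
      also have "N (H (w a) y - H 0 y) \<le> L * N (w a)" using lip that by (metis diff_zero)
      also have "L * N (w a) \<le> (Lp - 1) * N (w a)" unfolding Lp_def using Nn by (simp add: mult_right_mono)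
      also have "N (H 0 y) \<le> \<bar>B\<bar>" using bdd that by fastforce
      also have "N (w a) \<le> N (w a - wstar) + N wstar" using isn_tri[OF n, of "w a - wstar" wstar] by simp
      finally have "N (H (w a) y - w a) \<le> Lp * (N (w a - wstar) + N wstar) + \<bar>B\<bar>"
        using Lp0 by (simp add: algebra_simps)
      also have "\<dots> \<le> A * R" unfolding A_def R_def using Lp0 Nn[of wstar] Nn[of "w a - wstar"]
        by (simp add: algebra_simps mult_right_mono)
      finally show ?thesis .
    qed
    have Snn: "Sm t \<ge> 0" for t unfolding Sm_def using apos by (simp add: sum_nonneg)
    have etb: "N (w t - w a) \<le> A * R * Sm t * exp (Lp * Sm t)" if "a \<le> t" for t
      using that
    proof (induction t rule: dec_induct)
      case base then show ?case by (simp add: isn_0[OF n] Sm_def)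
    next
      case (step t)
      have ws: "w (Suc t) - w a = (w t - w a) + \<alpha> t *\<^sub>R (H (w t) (Y (Suc t)) - w t)"
        by (simp add: w_def)
      have "N (H (w t) (Y (Suc t)) - w t) \<le> N ((H (w t) (Y (Suc t)) - w t) - (H (w a) (Y (Suc t)) - w a))
           + N (H (w a) (Y (Suc t)) - w a)"
        using isn_tri[OF n, of "(H (w t) (Y (Suc t)) - w t) - (H (w a) (Y (Suc t)) - w a)" "H (w a) (Y (Suc t)) - w a"] by simp
      also have "\<dots> \<le> Lp * N (w t - w a) + A * R" using Glip Gbd Y by (meson add_mono)
      finally have g: "N (H (w t) (Y (Suc t)) - w t) \<le> Lp * N (w t - w a) + A * R" .
      have "N (w (Suc t) - w a) \<le> N (w t - w a) + \<alpha> t * N (H (w t) (Y (Suc t)) - w t)"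
        unfolding ws using isn_tri[OF n] isn_scale[OF n] apos by (metis abs_of_nonneg)
      also have "\<dots> \<le> N (w t - w a) + \<alpha> t * (Lp * N (w t - w a) + A * R)"
        using g apos by (simp add: mult_left_mono)
      also have "\<dots> \<le> A * R * (Sm t + \<alpha> t) * exp (Lp * (Sm t + \<alpha> t))"
        by (rule exp_step) (use Snn apos Lp0 A0 R1 Nn step.IH in auto)
      also have "Sm t + \<alpha> t = Sm (Suc t)" using step.hyps by (simp add: Sm_def)
      finally show ?case .
    qed
    have ab: "a < b" "m \<le> a" and Sb: "Sm b \<le> 2 * T m"
      using anchor_props[OF apos anti aT Tpos dv, of m] by (auto simp: a_def b_def Sm_def)
    have Smono: "Sm t \<le> Sm b" if "t \<le> b" for t
      unfolding Sm_def using that apos by (intro sum_mono2) auto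
    have zdef: "z1 H \<alpha> T w0 Y m = (\<Sum>t\<in>{a..<b}. \<alpha> t *\<^sub>R ((H (w t) (Y (Suc t)) - w t) - (H (w a) (Y (Suc t)) - w a)))"
      by (simp add: z1_def Let_def w_def a_def b_def)
    have "N (z1 H \<alpha> T w0 Y m) \<le> (\<Sum>t\<in>{a..<b}. N (\<alpha> t *\<^sub>R ((H (w t) (Y (Suc t)) - w t) - (H (w a) (Y (Suc t)) - w a))))"
      unfolding zdef by (rule isn_sum[OF n])
    also have "\<dots> \<le> (\<Sum>t\<in>{a..<b}. \<alpha> t * (Lp * (A * R * (2 * T m) * exp (Lp * (2 * Tmax)))))"
    proof (rule sum_mono)
      fix t assume t: "t \<in> {a..<b}"
      have St: "Sm t \<le> 2 * T m" using Smono[of t] t Sb by auto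
      have St2: "Sm t \<le> 2 * Tmax" using St Tbd[rule_format, of m] by linarith
      have "N (\<alpha> t *\<^sub>R ((H (w t) (Y (Suc t)) - w t) - (H (w a) (Y (Suc t)) - w a)))
          = \<alpha> t * N ((H (w t) (Y (Suc t)) - w t) - (H (w a) (Y (Suc t)) - w a))"
        using isn_scale[OF n] apos by (simp)
      also have "\<dots> \<le> \<alpha> t * (Lp * N (w t - w a))" using Glip Y apos by (simp add: mult_left_mono)
      also have "\<dots> \<le> \<alpha> t * (Lp * (A * R * Sm t * exp (Lp * Sm t)))"
        using etb[of t] t apos Lp0 by (intro mult_left_mono) auto
      also have "\<dots> \<le> \<alpha> t * (Lp * (A * R * (2 * T m) * exp (Lp * (2 * Tmax))))"
      proof -
        have "A * R * Sm t \<le> A * R * (2 * T m)" using St A0 R1 by (intro mult_left_mono) auto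
        moreover have "exp (Lp * Sm t) \<le> exp (Lp * (2 * Tmax))" using St2 Lp0 by (simp add: mult_left_mono)
        ultimately have "A * R * Sm t * exp (Lp * Sm t) \<le> A * R * (2 * T m) * exp (Lp * (2 * Tmax))"
          by (rule mult_mono) (use A0 R1 Snn Tpos[rule_format, of m] in auto)
        then show ?thesis using apos Lp0 by (intro mult_left_mono) auto
      qed
      finally show "N (\<alpha> t *\<^sub>R ((H (w t) (Y (Suc t)) - w t) - (H (w a) (Y (Suc t)) - w a)))
          \<le> \<alpha> t * (Lp * (A * R * (2 * T m) * exp (Lp * (2 * Tmax))))" .
    qed
    also have "\<dots> = Sm b * (Lp * (A * R * (2 * T m) * exp (Lp * (2 * Tmax))))"
      by (simp add: Sm_def sum_distrib_right)
    also have "\<dots> \<le> (2 * T m) * (Lp * (A * R * (2 * T m) * exp (Lp * (2 * Tmax))))"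
      using Sb A0 R1 Lp0 Tpos[rule_format, of m] by (intro mult_right_mono) (auto intro!: mult_nonneg_nonneg)
    also have "\<dots> = (T m)\<^sup>2 * K * R" by (simp add: K_def power2_eq_square algebra_simps)
    finally show "N (z1 H \<alpha> T w0 Y m) \<le> (T m)\<^sup>2 * K * (N (iter H \<alpha> w0 Y (anchor \<alpha> T m) - wstar) + 1)"
      by (simp add: R_def w_def a_def)
  qed
qed


lemma ln_ge1: "3 \<le> x \<Longrightarrow> 1 \<le> ln (x::real)"
proof -
  assume "3 \<le> x"
  then have "exp 1 \<le> x" using exp_le by linarith
  moreover have "0 < exp (1::real)" by simp
  moreover have "0 < x" using \<open>3 \<le> x\<close> by simp
  ultimately have "ln (exp 1) \<le> ln x" by (subst ln_le_cancel_iff) auto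
  then show ?thesis by simp
qed

lemma lnln_step:
  fixes t :: real assumes t: "0 \<le> t"
  shows "ln (ln (t + 4)) - ln (ln (t + 3)) \<le> 1 / ((t + 3) * ln (t + 3))"
proof -
  define u where "u = ln (t + 3)"
  define v where "v = ln (t + 4)"
  have u1: "u \<ge> 1" unfolding u_def using t by (intro ln_ge1) auto
  have vu: "v \<ge> u" unfolding u_def v_def using t by simp
  have "v - u = ln ((t + 4) / (t + 3))" unfolding u_def v_def using t by (simp add: ln_div)
  also have "\<dots> \<le> (t + 4) / (t + 3) - 1" using t by (intro ln_le_minus_one) auto
  also have "\<dots> = 1 / (t + 3)" using t by (simp add: field_simps)
  finally have d: "v - u \<le> 1 / (t + 3)" .
  have "ln v - ln u = ln (v / u)" using u1 vu by (simp add: ln_div)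
  also have "\<dots> \<le> v / u - 1" using u1 vu by (intro ln_le_minus_one) auto
  also have "\<dots> = (v - u) / u" using u1 by (simp add: field_simps)
  also have "\<dots> \<le> (1 / (t + 3)) / u" using d u1 by (intro divide_right_mono) auto
  also have "\<dots> = 1 / ((t + 3) * u)" by simp
  finally show ?thesis by (simp add: u_def v_def)
qed

lemma lnln_tele:
  assumes "a \<le> k"
  shows "ln (ln (real k + 3)) - ln (ln (real a + 3)) \<le> (\<Sum>t\<in>{a..<k}. 1 / ((real t + 3) * ln (real t + 3)))"
  using assms
proof (induction k rule: dec_induct)
  case base then show ?case by simp
next
  case (step k)
  have "ln (ln (real (Suc k) + 3)) - ln (ln (real k + 3)) \<le> 1 / ((real k + 3) * ln (real k + 3))"
  proof -
    have e: "real (Suc k) + 3 = real k + 4" by simp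
    show ?thesis unfolding e using lnln_step[of "real k"] by simp
  qed
  then show ?case using step.IH step.hyps by simp
qed

lemma diverge:
  fixes \<alpha> :: "nat \<Rightarrow> real"
  assumes c: "c > 0" and lb: "\<forall>t. c / ((real t + 3) * ln (real t + 3)) \<le> \<alpha> t"
  shows "\<forall>a x. \<exists>k. x \<le> (\<Sum>t\<in>{a..<k}. \<alpha> t)"
proof (intro allI)
  fix a :: nat and x :: real
  define M where "M = ln (ln (real a + 3)) + x / c"
  define k where "k = max a (nat \<lceil>exp (exp M)\<rceil>)"
  have ak: "a \<le> k" by (simp add: k_def)
  have "exp (exp M) \<le> real (nat \<lceil>exp (exp M)\<rceil>)" by (rule real_nat_ceiling_ge)
  also have "\<dots> \<le> real k" unfolding k_def by simp
  finally have "exp (exp M) \<le> real k + 3" by simp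
  then have "ln (exp (exp M)) \<le> ln (real k + 3)" by (subst ln_le_cancel_iff) auto
  then have "exp M \<le> ln (real k + 3)" by simp
  then have "ln (exp M) \<le> ln (ln (real k + 3))" by (subst ln_le_cancel_iff) auto
  then have "M \<le> ln (ln (real k + 3))" by simp
  then have "x / c \<le> ln (ln (real k + 3)) - ln (ln (real a + 3))" unfolding M_def by linarith
  then have "x \<le> c * (ln (ln (real k + 3)) - ln (ln (real a + 3)))" using c by (simp add: pos_divide_le_eq mult.commute)
  also have "\<dots> \<le> c * (\<Sum>t\<in>{a..<k}. 1 / ((real t + 3) * ln (real t + 3)))"
    using lnln_tele[OF ak] c by (simp add: mult_left_mono)
  also have "\<dots> = (\<Sum>t\<in>{a..<k}. c / ((real t + 3) * ln (real t + 3)))" by (simp add: sum_distrib_left)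
  also have "\<dots> \<le> (\<Sum>t\<in>{a..<k}. \<alpha> t)" using lb by (intro sum_mono) auto
  finally show "\<exists>k. x \<le> (\<Sum>t\<in>{a..<k}. \<alpha> t)" by blast
qed


lemma pw1: "1 \<le> (x::real) \<Longrightarrow> 0 \<le> \<nu> \<Longrightarrow> \<nu> \<le> 1 \<Longrightarrow> 1 \<le> x powr \<nu> \<and> x powr \<nu> \<le> x"
  using ge_one_powr_ge_zero[of x \<nu>] powr_mono[of \<nu> 1 x] by (simp add: powr_one)

lemma x3: "3 \<le> real t + 3" "1 \<le> ln (real t + 3)" "0 < ln (real t + 3)" "ln (real t + 3) \<le> real t + 3"
proof -
  show "3 \<le> real t + 3" by simp
  show l: "1 \<le> ln (real t + 3)" by (rule ln_ge1) simp
  then show "0 < ln (real t + 3)" by simp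
  show "ln (real t + 3) \<le> real t + 3" using ln_le_minus_one[of "real t + 3"] by simp
qed

lemma dlm: "0 < (y::real) \<Longrightarrow> y \<le> x \<Longrightarrow> 0 \<le> c \<Longrightarrow> c / x \<le> c / y"
  by (intro divide_left_mono) auto

definition lrprops :: "real \<Rightarrow> (nat \<Rightarrow> real) \<Rightarrow> (nat \<Rightarrow> real) \<Rightarrow> bool" where
  "lrprops C \<alpha> T \<longleftrightarrow> (\<forall>t. 0 \<le> \<alpha> t) \<and> (\<forall>s t. s \<le> t \<longrightarrow> \<alpha> t \<le> \<alpha> s) \<and> (\<forall>m. \<alpha> m \<le> T m)
     \<and> (\<forall>m. 0 < T m) \<and> (\<forall>m. T m \<le> C) \<and> (\<forall>t. C / ((real t + 3) * ln (real t + 3)) \<le> \<alpha> t)"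

lemma props_a: assumes C: "C > 0" and s: "setup_a C \<alpha> T" shows "lrprops C \<alpha> T"
proof -
  obtain \<nu> where nu: "0 < \<nu>" "\<nu> < 1" and a: "\<alpha> = (\<lambda>t. C / (real t + 3))"
    and T: "T = (\<lambda>m. C * (ln (real m + 3)) powr \<nu> / (real m + 3))" using s unfolding setup_a_def by blast
  have p: "1 \<le> ln (real t + 3) powr \<nu>" "ln (real t + 3) powr \<nu> \<le> ln (real t + 3)" for t
    using pw1[OF x3(2)[of t]] nu by auto
  show ?thesis unfolding lrprops_def a T
  proof (intro conjI allI impI)
    fix t show "0 \<le> C / (real t + 3)" using C by simp
  next
    fix s t :: nat assume "s \<le> t" then show "C / (real t + 3) \<le> C / (real s + 3)" using C by (intro dlm) auto
  next
    fix m show "C / (real m + 3) \<le> C * ln (real m + 3) powr \<nu> / (real m + 3)"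
      using p[of m] C by (intro divide_right_mono) auto
  next
    fix m show "0 < C * ln (real m + 3) powr \<nu> / (real m + 3)" using p[of m] C by simp
  next
    fix m
    have "ln (real m + 3) powr \<nu> \<le> real m + 3" using p[of m] x3(4)[of m] by linarith
    then have h: "C * ln (real m + 3) powr \<nu> \<le> C * (real m + 3)" using C by (intro mult_left_mono) auto
    then show "C * ln (real m + 3) powr \<nu> / (real m + 3) \<le> C" by (simp add: pos_divide_le_eq algebra_simps)
  next
    fix t show "C / ((real t + 3) * ln (real t + 3)) \<le> C / (real t + 3)"
      using x3[of t] C by (intro dlm) auto
  qed
qed

lemma props_b: assumes C: "C > 0" and s: "setup_b C \<alpha> T" shows "lrprops C \<alpha> T"
proof -
  obtain \<nu> \<nu>2 where nu: "2/3 < \<nu>" "\<nu> < 1" "1/2 < \<nu>2" "\<nu>2 < \<nu> / (2 - \<nu>)"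
    and a: "\<alpha> = (\<lambda>t. C / (real t + 3) powr \<nu>)"
    and T: "T = (\<lambda>m. C / (real m + 3) powr \<nu>2)" using s unfolding setup_b_def by blast
  have "\<nu> / (2 - \<nu>) \<le> \<nu>" using nu by (simp add: divide_le_eq algebra_simps)
  then have n2: "\<nu>2 \<le> \<nu>" using nu by linarith
  have p: "1 \<le> (real t + 3) powr \<nu>" "(real t + 3) powr \<nu> \<le> real t + 3" for t
    using pw1[of "real t + 3" \<nu>] nu by auto
  have p2: "1 \<le> (real t + 3) powr \<nu>2" for t using ge_one_powr_ge_zero[of "real t + 3" \<nu>2] nu by simp
  show ?thesis unfolding lrprops_def a T
  proof (intro conjI allI impI)
    fix t show "0 \<le> C / (real t + 3) powr \<nu>" using C by simp
  next
    fix s t :: nat assume "s \<le> t" then show "C / (real t + 3) powr \<nu> \<le> C / (real s + 3) powr \<nu>"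
      using C p[of s] nu by (intro dlm powr_mono2) auto
  next
    fix m show "C / (real m + 3) powr \<nu> \<le> C / (real m + 3) powr \<nu>2"
      using C p2[of m] n2 by (intro dlm powr_mono) auto
  next
    fix m show "0 < C / (real m + 3) powr \<nu>2" using C by simp
  next
    fix m show "C / (real m + 3) powr \<nu>2 \<le> C" using C p2[of m] by (simp add: divide_le_eq)
  next
    fix t
    have "(real t + 3) powr \<nu> \<le> (real t + 3) * ln (real t + 3)"
      using p[of t] x3[of t] by (smt (verit) mult_le_cancel_left1)
    then show "C / ((real t + 3) * ln (real t + 3)) \<le> C / (real t + 3) powr \<nu>"
      using C p[of t] by (intro dlm) auto
  qed
qed

lemma props_c: assumes C: "C > 0" and s: "setup_c C \<alpha> T" shows "lrprops C \<alpha> T"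
proof -
  obtain \<nu> where nu: "0 < \<nu>" "\<nu> < 1" and a: "\<alpha> = (\<lambda>t. C / ((real t + 3) * (ln (real t + 3)) powr \<nu>))"
    and T: "T = (\<lambda>m. C / (real m + 3))" using s unfolding setup_c_def by blast
  have p: "1 \<le> ln (real t + 3) powr \<nu>" "ln (real t + 3) powr \<nu> \<le> ln (real t + 3)" for t
    using pw1[OF x3(2)[of t]] nu by auto
  show ?thesis unfolding lrprops_def a T
  proof (intro conjI allI impI)
    fix t show "0 \<le> C / ((real t + 3) * ln (real t + 3) powr \<nu>)" using C by simp
  next
    fix s t :: nat assume st: "s \<le> t"
    have "ln (real s + 3) \<le> ln (real t + 3)" using st by simp
    then have "ln (real s + 3) powr \<nu> \<le> ln (real t + 3) powr \<nu>"
      using x3[of s] nu by (intro powr_mono2) auto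
    then have "(real s + 3) * ln (real s + 3) powr \<nu> \<le> (real t + 3) * ln (real t + 3) powr \<nu>"
      using st p[of s] by (intro mult_mono) auto
    then show "C / ((real t + 3) * ln (real t + 3) powr \<nu>) \<le> C / ((real s + 3) * ln (real s + 3) powr \<nu>)"
      using C p[of s] by (intro dlm) auto
  next
    fix m show "C / ((real m + 3) * ln (real m + 3) powr \<nu>) \<le> C / (real m + 3)"
      using C p[of m] by (intro dlm) (auto simp: mult_le_cancel_left1)
  next
    fix m show "0 < C / (real m + 3)" using C by simp
  next
    fix m show "C / (real m + 3) \<le> C" using C by (simp add: divide_le_eq)
  next
    fix t
    have "(real t + 3) * ln (real t + 3) powr \<nu> \<le> (real t + 3) * ln (real t + 3)"
      using p[of t] by (intro mult_left_mono) auto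
    then show "C / ((real t + 3) * ln (real t + 3)) \<le> C / ((real t + 3) * ln (real t + 3) powr \<nu>)"
      using C p[of t] by (intro dlm) auto
  qed
qed


theorem lemma5:
  fixes MY :: "'y measure" and P :: "'y \<Rightarrow> 'y measure" and d :: "'y measure"
    and H :: "real^'d \<Rightarrow> 'y \<Rightarrow> real^'d" and N Ns :: "real^'d \<Rightarrow> real"
    and \<kappa> L\<^sub>h C\<alpha> \<xi> :: real and wstar w0 :: "real^'d"
    and \<alpha> T :: "nat \<Rightarrow> real"
  assumes kernel: "P \<in> MY \<rightarrow>\<^sub>M subprob_algebra MY" "\<forall>y\<in>space MY. prob_space (P y)"
    and stat: "prob_space d" "sets d = sets MY" "bind d P = d"
    and stat_unique: "\<forall>q. prob_space q \<and> sets q = sets MY \<and> bind q P = q \<longrightarrow> q = d"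
    and mixing: "\<exists>C\<^sub>A \<rho>. 0 \<le> \<rho> \<and> \<rho> < 1 \<and> (\<forall>y\<in>space MY. \<forall>n. \<forall>A\<in>sets MY.
                   \<bar>measure (kernel_pow MY P n y) A - measure d A\<bar> \<le> C\<^sub>A * \<rho> ^ n)"
    and H_meas: "\<forall>w. H w \<in> borel_measurable MY"
    and norm: "is_norm N"
    and contr: "0 \<le> \<kappa>" "\<kappa> < 1"
      "\<forall>w w'. N ((\<integral>y. H w y \<partial>d) - (\<integral>y. H w' y \<partial>d)) \<le> \<kappa> * N (w - w')"
    and fixpt: "(\<integral>y. H wstar y \<partial>d) = wstar"
    and lip: "\<forall>w w'. \<forall>y\<in>space MY. N (H w y - H w' y) \<le> L\<^sub>h * N (w - w')"
    and bdd: "\<exists>B. \<forall>y\<in>space MY. N (H 0 y) \<le> B"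
    and smooth: "is_norm Ns" "half_sq_smooth Ns" "\<xi> > 0"
    and lr: "C\<alpha> > 0" "setup_a C\<alpha> \<alpha> T \<or> setup_b C\<alpha> \<alpha> T \<or> setup_c C\<alpha> \<alpha> T"
  shows "\<exists>C::real. \<exists>m0::nat. \<forall>Y::nat \<Rightarrow> 'y. (\<forall>t. Y t \<in> space MY) \<longrightarrow>
           (\<forall>m\<ge>m0. Mnorm N Ns \<xi> (z1 H \<alpha> T w0 Y m)
              \<le> (T m)\<^sup>2 * C * (Mnorm N Ns \<xi> (iter H \<alpha> w0 Y (anchor \<alpha> T m) - wstar) + 1))"
proof -
  have P: "lrprops C\<alpha> \<alpha> T" using lr props_a props_b props_c by blast
  then have apos: "\<forall>t. 0 \<le> \<alpha> t" and anti: "\<forall>s t. s \<le> t \<longrightarrow> \<alpha> t \<le> \<alpha> s"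
    and aT: "\<forall>m. \<alpha> m \<le> T m" and Tpos: "\<forall>m. 0 < T m" and Tbd: "\<forall>m. T m \<le> C\<alpha>"
    and lb: "\<forall>t. C\<alpha> / ((real t + 3) * ln (real t + 3)) \<le> \<alpha> t"
    unfolding lrprops_def by auto
  have dv: "\<forall>a x. \<exists>k. x \<le> (\<Sum>t\<in>{a..<k}. \<alpha> t)" by (rule diverge[OF lr(1) lb])
  obtain B where B: "\<forall>y\<in>space MY. N (H 0 y) \<le> B" using bdd by blast
  obtain K where K: "\<forall>Y. (\<forall>t. Y t \<in> space MY) \<longrightarrow> (\<forall>m. N (z1 H \<alpha> T w0 Y m)
            \<le> (T m)\<^sup>2 * K * (N (iter H \<alpha> w0 Y (anchor \<alpha> T m) - wstar) + 1))"
    using main_generic[OF norm lip B apos anti aT Tpos Tbd dv, of w0 wstar] by blast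
  obtain c where c: "c > 0" "\<And>w. c * N w \<le> Mnorm N Ns \<xi> w"
    using Mnorm_ge[OF norm smooth(1) smooth(3)] by blast
  define K0 where "K0 = max K 0"
  define D where "D = max 1 (1 / c)"
  show ?thesis
  proof (intro exI[of _ "K0 * D"] exI[of _ "0::nat"] allI impI)
    fix Y :: "nat \<Rightarrow> 'y" and m :: nat
    assume Y: "\<forall>t. Y t \<in> space MY" and "0 \<le> m"
    define d where "d = iter H \<alpha> w0 Y (anchor \<alpha> T m) - wstar"
    have Nd: "N d \<ge> 0" by (rule isn_nonneg[OF norm])
    have Md: "Mnorm N Ns \<xi> d \<ge> 0" by (rule Mnorm_nonneg[OF smooth(3)])
    have "Mnorm N Ns \<xi> (z1 H \<alpha> T w0 Y m) \<le> N (z1 H \<alpha> T w0 Y m)"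
      by (rule Mnorm_le[OF norm smooth(1) smooth(3)])
    also have "\<dots> \<le> (T m)\<^sup>2 * K * (N d + 1)" using K Y by (simp add: d_def)
    also have "\<dots> \<le> (T m)\<^sup>2 * K0 * (N d + 1)"
      using Nd by (intro mult_right_mono mult_left_mono) (auto simp: K0_def)
    also have "\<dots> \<le> (T m)\<^sup>2 * K0 * (D * (Mnorm N Ns \<xi> d + 1))"
    proof (intro mult_left_mono)
      have "N d \<le> Mnorm N Ns \<xi> d / c" using c by (simp add: pos_le_divide_eq mult.commute)
      also have "\<dots> = (1 / c) * Mnorm N Ns \<xi> d" by simp
      also have "\<dots> \<le> D * Mnorm N Ns \<xi> d" using Md by (intro mult_right_mono) (auto simp: D_def)
      finally have "N d \<le> D * Mnorm N Ns \<xi> d" .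
      moreover have "1 \<le> D" by (simp add: D_def)
      ultimately show "N d + 1 \<le> D * (Mnorm N Ns \<xi> d + 1)" by (simp add: distrib_left)
      show "0 \<le> (T m)\<^sup>2 * K0" by (simp add: K0_def)
    qed
    also have "\<dots> = (T m)\<^sup>2 * (K0 * D) * (Mnorm N Ns \<xi> d + 1)" by (simp add: algebra_simps)
    finally show "Mnorm N Ns \<xi> (z1 H \<alpha> T w0 Y m)
              \<le> (T m)\<^sup>2 * (K0 * D) * (Mnorm N Ns \<xi> (iter H \<alpha> w0 Y (anchor \<alpha> T m) - wstar) + 1)"
      by (simp add: d_def)
  qed
qed

end
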